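(* Let $k\in\mathbb N$, $f=\lambda z+\mathrm{h.o.t.}\in\mathcal L_k$ with $0<\lambda<1$, and let $\beta>1$. Define $W_1\subseteq\mathbb R\times\mathbb Z^k$ as the additive semigroup generated by $$\mathrm{Supp}(f)\cup\{(\alpha-1,\boldsymbol m):(\alpha,\boldsymbol m)\in\mathrm{Supp}(f-\lambda\,\mathrm{id})\}\cup\{(0,1,0,\dots,0),\dots,(0,\dots,0,1)\},$$ inductively $W_{n+1}$ as the additive semigroup generated by $$W_n\cup\{(\beta_1,\boldsymbol m_1)+\cdots+(\beta_{n+1},\boldsymbol m_{n+1})-(n,\mathbf 0_k):(\beta_i,\boldsymbol m_i)\in W_n,\ \beta_i>1\},$$ and set $W:=\bigcup_{n\ge1}W_n$, $W_\beta:=W\cap(\mathbb R_{\ge\beta}\times\mathbb Z^k)$. Then $W_\beta$ is well-ordered (for the lexicographic order) and for every $m\ge2$ and all $(\beta_1,\boldsymbol m_1),\dots,(\beta_m,\boldsymbol m_m)\in W_\beta$, $$(\beta_1,\boldsymbol m_1)+\cdots+(\beta_m,\boldsymbol m_m)-(m-1,\mathbf 0_k)\in W_\beta.$$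
   Context: $z$ infinitesimal; $\boldsymbol\ell_1:=-1/\ln z$, $\boldsymbol\ell_{j+1}:=\boldsymbol\ell_j\circ\boldsymbol\ell_1$. $\mathcal L_k$: formal sums $\sum a_{\alpha,n_1,\dots,n_k}z^\alpha\boldsymbol\ell_1^{n_1}\cdots\boldsymbol\ell_k^{n_k}$, real coefficients, well-ordered support $\mathrm{Supp}(f)$ in $\mathbb R_{\ge0}\times\mathbb Z^k$ (lexicographic order). The vectors $(0,1,0,\dots,0),\dots,(0,\dots,0,1)$ are the unit vectors of $\mathbb R\times\mathbb Z^k$ in the $\mathbb Z^k$ coordinates; $\mathbf 0_k=(0,\dots,0)\in\mathbb Z^k$. *)

theory Defs
  imports Main "HOL.Real"
begin

text \<open>Points of \<open>\<real> \<times> \<int>^k\<close> are represented as pairs (alpha, m) with m an integer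
list of length k.  A transseries f in L_k is represented by its coefficient function
c :: pt => real; its support is the set of points with nonzero coefficient.\<close>

type_synonym pt = "real \<times> int list"

definition zvec :: "nat \<Rightarrow> int list" where
  "zvec k = replicate k 0"

definition unitvec :: "nat \<Rightarrow> nat \<Rightarrow> pt" where
  "unitvec k i = (0, (replicate k 0)[i := 1])"

definition padd :: "pt \<Rightarrow> pt \<Rightarrow> pt" where
  "padd p q = (fst p + fst q, map2 (+) (snd p) (snd q))"

definition psub :: "pt \<Rightarrow> pt \<Rightarrow> pt" where
  "psub p q = (fst p - fst q, map2 (-) (snd p) (snd q))"

definition psum :: "nat \<Rightarrow> pt list \<Rightarrow> pt" where
  "psum k xs = foldr padd xs (0, zvec k)"

definition vlex_less :: "int list \<Rightarrow> int list \<Rightarrow> bool" where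
  "vlex_less m n \<longleftrightarrow> (\<exists>i < length m. take i m = take i n \<and> m ! i < n ! i)"

definition lex_less :: "pt \<Rightarrow> pt \<Rightarrow> bool" where
  "lex_less p q \<longleftrightarrow> fst p < fst q \<or> (fst p = fst q \<and> vlex_less (snd p) (snd q))"

definition lex_le :: "pt \<Rightarrow> pt \<Rightarrow> bool" where
  "lex_le p q \<longleftrightarrow> p = q \<or> lex_less p q"

definition lex_wellordered :: "pt set \<Rightarrow> bool" where
  "lex_wellordered S \<longleftrightarrow> (\<forall>T \<subseteq> S. T \<noteq> {} \<longrightarrow> (\<exists>t\<in>T. \<forall>u\<in>T. lex_le t u))"

inductive_set semigroup_gen :: "pt set \<Rightarrow> pt set" for G where
  gen: "x \<in> G \<Longrightarrow> x \<in> semigroup_gen G"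
| add: "x \<in> semigroup_gen G \<Longrightarrow> y \<in> semigroup_gen G \<Longrightarrow> padd x y \<in> semigroup_gen G"

definition supp :: "(pt \<Rightarrow> real) \<Rightarrow> pt set" where
  "supp c = {p. c p \<noteq> 0}"

definition in_Lk :: "nat \<Rightarrow> (pt \<Rightarrow> real) \<Rightarrow> bool" where
  "in_Lk k c \<longleftrightarrow> supp c \<subseteq> {p. fst p \<ge> 0 \<and> length (snd p) = k} \<and> lex_wellordered (supp c)"

text \<open>f = lambda z + h.o.t.: coefficient lambda at (1, 0_k), all other support points
lexicographically larger (higher order).\<close>
definition leading_lambda_z :: "nat \<Rightarrow> (pt \<Rightarrow> real) \<Rightarrow> real \<Rightarrow> bool" where
  "leading_lambda_z k c lam \<longleftrightarrow> c (1, zvec k) = lam \<and> (\<forall>p \<in> supp c. lex_le (1, zvec k) p)"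

definition minus_lin :: "nat \<Rightarrow> (pt \<Rightarrow> real) \<Rightarrow> real \<Rightarrow> pt \<Rightarrow> real" where
  "minus_lin k c lam p = c p - (if p = (1, zvec k) then lam else 0)"

definition W1_gens :: "nat \<Rightarrow> (pt \<Rightarrow> real) \<Rightarrow> real \<Rightarrow> pt set" where
  "W1_gens k c lam = supp c \<union> {(fst p - 1, snd p) | p. p \<in> supp (minus_lin k c lam)}
                   \<union> {unitvec k i | i. i < k}"

text \<open>Wseq k c lambda n is W_{n+1} of the paper.\<close>
primrec Wseq :: "nat \<Rightarrow> (pt \<Rightarrow> real) \<Rightarrow> real \<Rightarrow> nat \<Rightarrow> pt set" where
  "Wseq k c lam 0 = semigroup_gen (W1_gens k c lam)"
| "Wseq k c lam (Suc n) = semigroup_gen (Wseq k c lam n \<union>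
      {psub (psum k xs) (real (n + 1), zvec k) | xs.
         length xs = n + 2 \<and> (\<forall>x \<in> set xs. x \<in> Wseq k c lam n \<and> fst x > 1)})"

definition Wall :: "nat \<Rightarrow> (pt \<Rightarrow> real) \<Rightarrow> real \<Rightarrow> pt set" where
  "Wall k c lam = (\<Union>n. Wseq k c lam n)"

definition Wbeta :: "nat \<Rightarrow> (pt \<Rightarrow> real) \<Rightarrow> real \<Rightarrow> real \<Rightarrow> pt set" where
  "Wbeta k c lam \<beta> = {p \<in> Wall k c lam. fst p \<ge> \<beta>}"

end

theory Submission
  imports Defs
begin


fun rless :: "real list \<Rightarrow> real list \<Rightarrow> bool" where
  "rless (x#xs) (y#ys) = (x < y \<or> (x = y \<and> rless xs ys))"
| "rless _ _ = False"

lemma rless_irrefl: "\<not> rless x x" by (induction x) auto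

lemma rless_trans: "rless x y \<Longrightarrow> rless y z \<Longrightarrow> rless x z"
proof (induction x arbitrary: y z)
  case Nil then show ?case by simp
next
  case (Cons a x)
  then obtain b y' where y: "y = b # y'" by (cases y) auto
  with Cons obtain c z' where z: "z = c # z'" by (cases z) auto
  show ?case using Cons.prems Cons.IH[of y' z'] unfolding y z by auto
qed

lemma rless_asym: "rless x y \<Longrightarrow> \<not> rless y x"
  using rless_trans rless_irrefl by blast

lemma rless_total: "length x = length y \<Longrightarrow> x \<noteq> y \<Longrightarrow> rless x y \<or> rless y x"
proof (induction x arbitrary: y)
  case Nil then show ?case by simp
next
  case (Cons a x)
  then obtain b y' where y: "y = b # y'" by (cases y) auto
  show ?case using Cons.prems Cons.IH[of y'] unfolding y by auto
qed

definition rle :: "real list \<Rightarrow> real list \<Rightarrow> bool" where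
  "rle x y \<longleftrightarrow> x = y \<or> rless x y"

lemma rle_trans: "rle x y \<Longrightarrow> rle y z \<Longrightarrow> rle x z"
  unfolding rle_def using rless_trans by blast

lemma not_rless_rle: "length x = length y \<Longrightarrow> \<not> rless x y \<Longrightarrow> rle y x"
  unfolding rle_def using rless_total by blast

lemma rle_rless_contra: "rle x y \<Longrightarrow> rless y x \<Longrightarrow> False"
  unfolding rle_def using rless_asym rless_irrefl by blast

definition vadd :: "real list \<Rightarrow> real list \<Rightarrow> real list" where
  "vadd xs ys = map2 (+) xs ys"

lemma vadd_Cons[simp]: "vadd (a#x) (b#y) = (a+b) # vadd x y"
  by (simp add: vadd_def)
lemma vadd_Nil1[simp]: "vadd [] y = []" by (simp add: vadd_def)
lemma vadd_Nil2[simp]: "vadd x [] = []" by (simp add: vadd_def)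
lemma length_vadd[simp]: "length (vadd x y) = min (length x) (length y)"
  by (simp add: vadd_def)

lemma vadd_comm: "vadd x y = vadd y x"
proof (induction x arbitrary: y)
  case Nil then show ?case by simp
next
  case (Cons a x) then show ?case by (cases y) auto
qed

lemma vadd_assoc: "vadd (vadd x y) z = vadd x (vadd y z)"
proof (induction x arbitrary: y z)
  case Nil then show ?case by simp
next
  case (Cons a x) then show ?case
    by (cases y; cases z) auto
qed

lemma vadd_left_comm: "vadd a (vadd b c) = vadd b (vadd a c)"
proof -
  have "vadd a (vadd b c) = vadd (vadd a b) c" by (simp add: vadd_assoc)
  also have "\<dots> = vadd (vadd b a) c" by (simp add: vadd_comm[of a b])
  finally show ?thesis by (simp add: vadd_assoc)
qed

lemma vadd_swap: "vadd (vadd a b) (vadd c d) = vadd (vadd a c) (vadd b d)"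
  by (simp add: vadd_assoc vadd_left_comm[of b c])

lemma vadd_zeros: "length x = n \<Longrightarrow> vadd x (replicate n 0) = x"
  by (induction x arbitrary: n) auto

lemma vadd_zeros2: "length x = n \<Longrightarrow> vadd (replicate n 0) x = x"
  using vadd_zeros vadd_comm by metis

lemma rless_add: "rless a b \<Longrightarrow> length a = length c \<Longrightarrow> length b = length c \<Longrightarrow>
   rless (vadd a c) (vadd b c)"
proof (induction a arbitrary: b c)
  case Nil then show ?case by simp
next
  case (Cons x a)
  then obtain y b' where b: "b = y # b'" by (cases b) auto
  with Cons obtain z c' where c: "c = z # c'" by (cases c) auto
  show ?case using Cons.prems Cons.IH[of b' c'] unfolding b c by auto
qed

lemma rle_add: "rle a b \<Longrightarrow> rle c d \<Longrightarrow> length a = n \<Longrightarrow> length b = n \<Longrightarrow> length c = n \<Longrightarrow> length d = n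
  \<Longrightarrow> rle (vadd a c) (vadd b d)"
proof -
  assume h: "rle a b" "rle c d" "length a = n" "length b = n" "length c = n" "length d = n"
  have 1: "rle (vadd a c) (vadd b c)" using h rless_add unfolding rle_def by metis
  have "rle (vadd c b) (vadd d b)" using h rless_add unfolding rle_def by metis
  then have 2: "rle (vadd b c) (vadd b d)" by (simp add: vadd_comm)
  show ?thesis using 1 2 rle_trans by blast
qed

lemma rless_add_cancel: "rless (vadd a c) (vadd b c) \<Longrightarrow> length a = length c \<Longrightarrow> length b = length c \<Longrightarrow>
   rless a b"
proof (rule ccontr)
  assume h: "rless (vadd a c) (vadd b c)" "length a = length c" "length b = length c" "\<not> rless a b"
  then have "rle b a" using not_rless_rle by metis
  then have "rle (vadd b c) (vadd a c)" using rless_add h unfolding rle_def by metis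
  then show False using h(1) rle_rless_contra by blast
qed

definition rwo :: "real list set \<Rightarrow> bool" where
  "rwo S \<longleftrightarrow> wf {(x,y). x \<in> S \<and> y \<in> S \<and> rless x y}"

lemma rwo_chain: "rwo S \<longleftrightarrow> \<not>(\<exists>f. \<forall>i. f i \<in> S \<and> rless (f (Suc i)) (f i))"
  unfolding rwo_def wf_iff_no_infinite_down_chain by blast

lemma rwo_min: assumes "rwo S" "T \<subseteq> S" "t0 \<in> T" shows "\<exists>t\<in>T. \<forall>u\<in>T. \<not> rless u t"
proof -
  have "wf {(x,y). x \<in> S \<and> y \<in> S \<and> rless x y}" using assms(1) rwo_def by blast
  then show ?thesis
    by (rule wfE_min[OF _ assms(3)]) (use assms(2) in blast)
qed

lemma rwo_from_min:
  assumes "\<And>T t0. T \<subseteq> S \<Longrightarrow> t0 \<in> T \<Longrightarrow> \<exists>t\<in>T. \<forall>u\<in>T. \<not> rless u t"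
  shows "rwo S"
  unfolding rwo_def
proof (rule wfI_min)
  fix x Q assume x: "x \<in> (Q :: real list set)"
  show "\<exists>z\<in>Q. \<forall>y. (y, z) \<in> {(x, y). x \<in> S \<and> y \<in> S \<and> rless x y} \<longrightarrow> y \<notin> Q"
  proof (cases "Q \<inter> S = {}")
    case True then show ?thesis using x by blast
  next
    case False
    then obtain t0 where "t0 \<in> Q \<inter> S" by blast
    from assms[OF _ this] obtain t where "t \<in> Q \<inter> S" "\<forall>u\<in>Q \<inter> S. \<not> rless u t" by blast
    then show ?thesis by blast
  qed
qed

lemma rwo_subset: "rwo S \<Longrightarrow> T \<subseteq> S \<Longrightarrow> rwo T"
  unfolding rwo_chain by blast

lemma rwo_empty: "rwo {}" unfolding rwo_chain by blast

lemma rwo_single: "rwo {x}" unfolding rwo_chain using rless_irrefl by (metis singletonD)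

lemma rwo_union:
  assumes A: "rwo A" and B: "rwo B" and len: "A \<union> B \<subseteq> {x. length x = n}"
  shows "rwo (A \<union> B)"
proof (rule rwo_from_min)
  fix T t0 assume T: "T \<subseteq> A \<union> B" "t0 \<in> T"
  show "\<exists>t\<in>T. \<forall>u\<in>T. \<not> rless u t"
  proof (cases "T \<inter> A = {}")
    case True
    then have "T \<subseteq> B" using T by blast
    then show ?thesis using rwo_min[OF B _ T(2)] by blast
  next
    case False
    then obtain a0 where "a0 \<in> T \<inter> A" by blast
    from rwo_min[OF A _ this] obtain a where a: "a \<in> T \<inter> A" "\<forall>u\<in>T \<inter> A. \<not> rless u a" by blast
    show ?thesis
    proof (cases "T \<inter> B = {}")
      case True
      then have "T \<subseteq> A" using T by blast
      then show ?thesis using a by blast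
    next
      case False
      then obtain b0 where "b0 \<in> T \<inter> B" by blast
      from rwo_min[OF B _ this] obtain b where b: "b \<in> T \<inter> B" "\<forall>u\<in>T \<inter> B. \<not> rless u b" by blast
      have la: "length a = n" "length b = n" using a b len by auto
      show ?thesis
      proof (cases "rless b a")
        case True
        have "\<forall>u\<in>T. \<not> rless u b"
        proof
          fix u assume u: "u \<in> T"
          show "\<not> rless u b"
          proof
            assume r: "rless u b"
            show False
            proof (cases "u \<in> A")
              case True then show False using a u r \<open>rless b a\<close> rless_trans by blast
            next
              case False then show False using u T b r by blast
            qed
          qed
        qed
        then show ?thesis using b by blast
      next
        case False
        then have ab: "rle a b" using not_rless_rle la by metis
        have "\<forall>u\<in>T. \<not> rless u a"
        proof
          fix u assume u: "u \<in> T"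
          show "\<not> rless u a"
          proof
            assume r: "rless u a"
            show False
            proof (cases "u \<in> A")
              case True then show False using a u r by blast
            next
              case False
              then have "u \<in> B" using u T by blast
              moreover have "rless u b" using r ab rless_trans unfolding rle_def by blast
              ultimately show False using b u by blast
            qed
          qed
        qed
        then show ?thesis using a by blast
      qed
    qed
  qed
qed

lemma rwo_finite: "finite S \<Longrightarrow> S \<subseteq> {x. length x = n} \<Longrightarrow> rwo S"
proof (induction S rule: finite_induct)
  case empty show ?case by (rule rwo_empty)
next
  case (insert x F)
  have "rwo ({x} \<union> F)" by (rule rwo_union[OF rwo_single]) (use insert in auto)
  then show ?case by simp
qed

lemma rwo_image:
  assumes refl: "\<And>x y. x\<in>S \<Longrightarrow> y\<in>S \<Longrightarrow> rless (g x) (g y) \<Longrightarrow> rless x y"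
    and S: "rwo S"
  shows "rwo (g ` S)"
  unfolding rwo_chain
proof
  assume "\<exists>f. \<forall>i. f i \<in> g ` S \<and> rless (f (Suc i)) (f i)"
  then obtain f where f: "\<forall>i. f i \<in> g ` S \<and> rless (f (Suc i)) (f i)" by blast
  then have "\<forall>i. \<exists>x. x \<in> S \<and> f i = g x" by blast
  then obtain h where h: "\<forall>i. h i \<in> S \<and> f i = g (h i)" by metis
  have "\<forall>i. h i \<in> S \<and> rless (h (Suc i)) (h i)" using f h refl by metis
  then show False using S unfolding rwo_chain by blast
qed

lemma rwo_preimage:
  assumes pres: "\<And>x y. x\<in>S \<Longrightarrow> y\<in>S \<Longrightarrow> rless x y \<Longrightarrow> rless (g x) (g y)"
    and S: "rwo (g ` S)"
  shows "rwo S"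
  unfolding rwo_chain
proof
  assume "\<exists>f. \<forall>i. f i \<in> S \<and> rless (f (Suc i)) (f i)"
  then obtain f where f: "\<forall>i. f i \<in> S \<and> rless (f (Suc i)) (f i)" by blast
  then have "\<forall>i. g (f i) \<in> g ` S \<and> rless (g (f (Suc i))) (g (f i))" using pres by blast
  then have "\<exists>f. \<forall>i. f i \<in> g ` S \<and> rless (f (Suc i)) (f i)" by (rule exI[of _ "\<lambda>i. g (f i)"])
  then show False using S unfolding rwo_chain by blast
qed

lemma chain_trans:
  assumes "\<forall>i. rless (f (Suc i)) (f i)" "i < j" shows "rless (f j) (f i)"
  using assms(2)
proof (induction j)
  case 0 then show ?case by simp
next
  case (Suc j)
  show ?case
  proof (cases "i = j")
    case True then show ?thesis using assms(1) by simp
  next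
    case False then have "i < j" using Suc by simp
    then show ?thesis using Suc.IH assms(1) rless_trans by blast
  qed
qed

lemma nondec_subseq:
  fixes f :: "nat \<Rightarrow> real list"
  assumes S: "rwo S" and f: "\<forall>i. f i \<in> S" and len: "S \<subseteq> {x. length x = n}"
  shows "\<exists>g. strict_mono g \<and> (\<forall>i. rle (f (g i)) (f (g (Suc i))))"
proof -
  have "\<forall>N. \<exists>m. N \<le> m \<and> (\<forall>j\<ge>N. \<not> rless (f j) (f m))"
  proof
    fix N
    have "f ` {N..} \<subseteq> S" "f N \<in> f ` {N..}" using f by auto
    from rwo_min[OF S this] obtain t where "t \<in> f ` {N..}" "\<forall>u\<in>f ` {N..}. \<not> rless u t" by blast
    then show "\<exists>m. N \<le> m \<and> (\<forall>j\<ge>N. \<not> rless (f j) (f m))" by auto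
  qed
  then obtain m :: "nat \<Rightarrow> nat" where m: "\<forall>N. N \<le> m N \<and> (\<forall>j\<ge>N. \<not> rless (f j) (f (m N)))" by metis
  define g where "g = rec_nat (m 0) (\<lambda>_ x. m (Suc x))"
  have g0: "g 0 = m 0" and gS: "\<And>i. g (Suc i) = m (Suc (g i))" by (simp_all add: g_def)
  have "\<forall>i. g i < g (Suc i)" using m gS by (metis Suc_le_eq)
  then have sm: "strict_mono g" by (simp add: strict_mono_Suc_iff)
  have gN: "\<forall>i. \<exists>N \<le> g i. g i = m N"
  proof
    fix i show "\<exists>N \<le> g i. g i = m N"
      by (cases i) (use g0 gS m in auto)
  qed
  have "\<forall>i. rle (f (g i)) (f (g (Suc i)))"
  proof
    fix i
    obtain N where N: "N \<le> g i" "g i = m N" using gN by blast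
    have "g (Suc i) \<ge> N" using N sm by (meson le_trans less_imp_le strict_mono_Suc_iff)
    moreover have "\<forall>j\<ge>N. \<not> rless (f j) (f (m N))" using m by blast
    ultimately have "\<not> rless (f (g (Suc i))) (f (m N))" by blast
    then have "\<not> rless (f (g (Suc i))) (f (g i))" unfolding N(2) .
    moreover have "length (f (g (Suc i))) = length (f (g i))" using f len by (simp add: subset_iff)
    ultimately show "rle (f (g i)) (f (g (Suc i)))" using not_rless_rle by blast
  qed
  then show ?thesis using sm by blast
qed

definition vset_add :: "real list set \<Rightarrow> real list set \<Rightarrow> real list set" where
  "vset_add A B = {vadd a b | a b. a \<in> A \<and> b \<in> B}"

lemma rwo_plus:
  assumes A: "rwo A" and B: "rwo B" and lA: "A \<subseteq> {x. length x = n}" and lB: "B \<subseteq> {x. length x = n}"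
  shows "rwo (vset_add A B)"
  unfolding rwo_chain
proof
  assume "\<exists>h. \<forall>i. h i \<in> vset_add A B \<and> rless (h (Suc i)) (h i)"
  then obtain h where h: "\<forall>i. h i \<in> vset_add A B" "\<forall>i. rless (h (Suc i)) (h i)" by blast
  then have "\<forall>i. \<exists>p. fst p \<in> A \<and> snd p \<in> B \<and> h i = vadd (fst p) (snd p)"
    unfolding vset_add_def by fastforce
  then obtain p where p: "\<forall>i. fst (p i) \<in> A \<and> snd (p i) \<in> B \<and> h i = vadd (fst (p i)) (snd (p i))" by metis
  define a where "a = (\<lambda>i. fst (p i))"
  define b where "b = (\<lambda>i. snd (p i))"
  have ab: "\<forall>i. a i \<in> A \<and> b i \<in> B \<and> h i = vadd (a i) (b i)" using p a_def b_def by auto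
  obtain g where g: "strict_mono g" "\<forall>i. rle (a (g i)) (a (g (Suc i)))"
    using nondec_subseq[OF A _ lA] ab by metis
  have "\<forall>i. b (g i) \<in> B \<and> rless (b (g (Suc i))) (b (g i))"
  proof
    fix i
    have hl: "rless (h (g (Suc i))) (h (g i))" using chain_trans[OF h(2)] g(1) by (simp add: strict_mono_def)
    have lens: "length (a (g i)) = n" "length (a (g (Suc i))) = n" "length (b (g i)) = n" "length (b (g (Suc i))) = n"
      using ab lA lB by auto
    have "rless (b (g (Suc i))) (b (g i))"
    proof (rule ccontr)
      assume "\<not> rless (b (g (Suc i))) (b (g i))"
      then have "rle (b (g i)) (b (g (Suc i)))" using not_rless_rle lens by metis
      then have "rle (h (g i)) (h (g (Suc i)))" using rle_add[OF g(2)[rule_format, of i]] lens ab by metis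
      then show False using hl rle_rless_contra by blast
    qed
    then show "b (g i) \<in> B \<and> rless (b (g (Suc i))) (b (g i))" using ab by blast
  qed
  then have "\<exists>f. \<forall>i. f i \<in> B \<and> rless (f (Suc i)) (f i)" by (rule exI[of _ "\<lambda>i. b (g i)"])
  then show False using B unfolding rwo_chain by blast
qed



inductive_set rgen :: "real list set \<Rightarrow> real list set" for X where
  gen: "x \<in> X \<Longrightarrow> x \<in> rgen X"
| add: "x \<in> rgen X \<Longrightarrow> y \<in> rgen X \<Longrightarrow> vadd x y \<in> rgen X"

lemma rgen_len: "X \<subseteq> {x. length x = n} \<Longrightarrow> x \<in> rgen X \<Longrightarrow> length x = n"
  by (erule rgen.induct) auto

definition vsum :: "nat \<Rightarrow> real list list \<Rightarrow> real list" where
  "vsum n L = foldr vadd L (replicate n 0)"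

lemma vsum_Nil[simp]: "vsum n [] = replicate n 0" by (simp add: vsum_def)
lemma vsum_Cons[simp]: "vsum n (x # L) = vadd x (vsum n L)" by (simp add: vsum_def)

lemma length_vsum: "set L \<subseteq> {x. length x = n} \<Longrightarrow> length (vsum n L) = n"
  by (induction L) auto

lemma vsum_append: "set L1 \<union> set L2 \<subseteq> {x. length x = n} \<Longrightarrow>
  vsum n (L1 @ L2) = vadd (vsum n L1) (vsum n L2)"
proof (induction L1)
  case Nil
  then have "length (vsum n L2) = n" using length_vsum by auto
  then show ?case by (simp add: vadd_zeros2)
next
  case (Cons a L1) then show ?case by (simp add: vadd_assoc)
qed

lemma rgen_vsum: assumes "X \<subseteq> {x. length x = n}" "x \<in> rgen X" shows
   "\<exists>L. L \<noteq> [] \<and> set L \<subseteq> X \<and> x = vsum n L"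
  using assms(2)
proof (induction x rule: rgen.induct)
  case (gen x) then show ?case using assms(1) by (intro exI[of _ "[x]"]) (auto simp: vadd_zeros)
next
  case (add x y)
  then obtain L1 L2 where "L1 \<noteq> []" "set L1 \<subseteq> X" "x = vsum n L1" "L2 \<noteq> []" "set L2 \<subseteq> X" "y = vsum n L2"
    by blast
  moreover have "vsum n (L1 @ L2) = vadd (vsum n L1) (vsum n L2)"
    using vsum_append[of L1 L2 n] assms(1) calculation by auto
  ultimately show ?case by (intro exI[of _ "L1 @ L2"]) auto
qed

lemma vsum_filter: "set L \<subseteq> {x. length x = n} \<Longrightarrow>
  vsum n L = vadd (vsum n (filter P L)) (vsum n (filter (\<lambda>x. \<not> P x) L))"
proof (induction L)
  case Nil then show ?case by (simp add: vadd_zeros)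
next
  case (Cons a L)
  then show ?case by (auto simp: vadd_assoc vadd_left_comm)
qed

fun vpow :: "real list set \<Rightarrow> nat \<Rightarrow> real list set \<Rightarrow> real list set" where
  "vpow A 0 Z = Z"
| "vpow A (Suc j) Z = vset_add A (vpow A j Z)"

lemma vpow_len: "A \<subseteq> {x. length x = n} \<Longrightarrow> Z \<subseteq> {x. length x = n} \<Longrightarrow> vpow A j Z \<subseteq> {x. length x = n}"
proof (induction j)
  case 0 then show ?case by simp
next
  case (Suc j)
  show ?case
  proof
    fix x assume "x \<in> vpow A (Suc j) Z"
    then obtain a b where ab: "a \<in> A" "b \<in> vpow A j Z" "x = vadd a b" by (auto simp: vset_add_def)
    have "length a = n" "length b = n" using ab Suc by auto
    then show "x \<in> {x. length x = n}" using ab by simp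
  qed
qed

lemma vpow_rwo: "A \<subseteq> {x. length x = n} \<Longrightarrow> Z \<subseteq> {x. length x = n} \<Longrightarrow> rwo A \<Longrightarrow> rwo Z \<Longrightarrow> rwo (vpow A j Z)"
proof (induction j)
  case 0 then show ?case by simp
next
  case (Suc j) then show ?case using rwo_plus vpow_len by simp
qed

lemma vsum_vpow: "set L \<subseteq> A \<Longrightarrow> A \<subseteq> {x. length x = n} \<Longrightarrow> z \<in> Z \<Longrightarrow> length z = n \<Longrightarrow>
   vadd (vsum n L) z \<in> vpow A (length L) Z"
proof (induction L)
  case Nil then show ?case by (simp add: vadd_zeros2)
next
  case (Cons a L)
  then have eq: "vadd (vsum n (a # L)) z = vadd a (vadd (vsum n L) z)" by (simp add: vadd_assoc)
  have mem: "vadd (vsum n L) z \<in> vpow A (length L) Z" using Cons by auto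
  have "vadd a (vadd (vsum n L) z) \<in> vset_add A (vpow A (length L) Z)"
    unfolding vset_add_def using Cons.prems mem by auto
  then show ?case using eq by simp
qed

lemma hd_vadd: "x \<noteq> [] \<Longrightarrow> y \<noteq> [] \<Longrightarrow> hd (vadd x y) = hd x + hd y"
  by (auto simp: neq_Nil_conv)

lemma vpow_hd:
  assumes "\<forall>a\<in>A. hd a \<ge> d \<and> length a = Suc m" "\<forall>z\<in>Z. hd z \<ge> 0 \<and> length z = Suc m"
  shows "x \<in> vpow A j Z \<Longrightarrow> hd x \<ge> real j * d \<and> length x = Suc m"
proof (induction j arbitrary: x)
  case 0 then show ?case using assms by auto
next
  case (Suc j)
  then obtain a y where ay: "a \<in> A" "y \<in> vpow A j Z" "x = vadd a y" by (auto simp: vset_add_def)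
  then have "hd y \<ge> real j * d" "length y = Suc m" using Suc.IH by auto
  moreover have "hd a \<ge> d" "length a = Suc m" using assms ay by auto
  moreover have "a \<noteq> []" "y \<noteq> []" using calculation by auto
  ultimately show ?case using ay hd_vadd[of a y] by (auto simp: algebra_simps)
qed

lemma rless_hd_le: "rless y x \<Longrightarrow> hd y \<le> hd x"
  by (cases y; cases x) auto

lemma hd_less_rless: "x \<noteq> [] \<Longrightarrow> y \<noteq> [] \<Longrightarrow> hd x < hd y \<Longrightarrow> rless x y"
  by (cases y; cases x) auto

lemma rwo_UN: fixes N :: nat shows "(\<And>j. rwo (F j)) \<Longrightarrow> (\<And>j. F j \<subseteq> {x. length x = n}) \<Longrightarrow> rwo (\<Union>j\<le>N. F j)"
proof (induction N)
  case 0 then show ?case by simp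
next
  case (Suc N)
  have "(\<Union>j\<le>Suc N. F j) = (\<Union>j\<le>N. F j) \<union> F (Suc N)" by (auto simp: atMost_Suc)
  moreover have "rwo ((\<Union>j\<le>N. F j) \<union> F (Suc N))"
    by (rule rwo_union[where n=n]) (use Suc in auto)
  ultimately show ?case by simp
qed

lemma rgen_empty: "rgen {} = {}"
proof -
  have "x \<in> rgen {} \<Longrightarrow> False" for x by (induction rule: rgen.induct) auto
  then show ?thesis by blast
qed

lemma neumann:
  "X \<subseteq> {v. length v = n \<and> rless (replicate n 0) v} \<Longrightarrow> rwo X \<Longrightarrow> rwo (rgen X)"
proof (induction n arbitrary: X)
  case 0
  then have "X = {}" by auto
  then show ?case using rgen_empty rwo_empty by simp
next
  case (Suc m)
  have lenX: "X \<subseteq> {x. length x = Suc m}" using Suc.prems by auto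
  define X0 where "X0 = {t. 0 # t \<in> X}"
  define Xp where "Xp = {x\<in>X. 0 < hd x}"
  have Xform: "\<forall>x\<in>X. (\<exists>t. x = 0 # t \<and> t \<in> X0) \<or> x \<in> Xp"
  proof
    fix x assume x: "x \<in> X"
    then have "length x = Suc m" "rless (replicate (Suc m) 0) x" using Suc.prems by auto
    then obtain h t where "x = h # t" "0 < h \<or> (0 = h \<and> rless (replicate m 0) t)"
      by (cases x) auto
    then show "(\<exists>t. x = 0 # t \<and> t \<in> X0) \<or> x \<in> Xp" using x unfolding X0_def Xp_def by auto
  qed
  have X0pos: "X0 \<subseteq> {v. length v = m \<and> rless (replicate m 0) v}"
    using Suc.prems unfolding X0_def by auto
  have lenX0: "X0 \<subseteq> {x. length x = m}" using X0pos by auto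
  have "rwo (Cons 0 ` X0)"
    by (rule rwo_subset[OF Suc.prems(2)]) (auto simp: X0_def)
  then have "rwo X0" by (rule rwo_preimage[rotated]) simp
  then have rg0: "rwo (rgen X0)" using Suc.IH X0pos by blast
  define Z where "Z = insert (replicate (Suc m) 0) (Cons 0 ` rgen X0)"
  have lenZ: "Z \<subseteq> {x. length x = Suc m}" unfolding Z_def using rgen_len[OF lenX0] by auto
  have rC: "rwo (Cons 0 ` rgen X0)" by (rule rwo_image[OF _ rg0]) simp
  have Zeq: "Z = {replicate (Suc m) 0} \<union> Cons 0 ` rgen X0" unfolding Z_def by simp
  have "rwo ({replicate (Suc m) 0} \<union> Cons 0 ` rgen X0)"
    by (rule rwo_union[where n="Suc m", OF rwo_single rC]) (use lenZ Zeq in simp)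
  then have rwoZ: "rwo Z" using Zeq by simp
  have Zhd: "\<forall>z\<in>Z. hd z \<ge> 0 \<and> length z = Suc m" using lenZ unfolding Z_def by auto
  have lenXp: "Xp \<subseteq> {x. length x = Suc m}" using lenX Xp_def by auto
  have rwoXp: "rwo Xp" using rwo_subset[OF Suc.prems(2)] Xp_def by auto
  obtain d where d: "d > 0" "\<forall>a\<in>Xp. hd a \<ge> d"
  proof (cases "Xp = {}")
    case True then show ?thesis using that[of 1] by auto
  next
    case False
    then obtain a0 where "a0 \<in> Xp" by blast
    from rwo_min[OF rwoXp _ this] obtain x0 where x0: "x0 \<in> Xp" "\<forall>u\<in>Xp. \<not> rless u x0" by blast
    have "\<forall>a\<in>Xp. hd a \<ge> hd x0"
    proof
      fix a assume a: "a \<in> Xp"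
      have "a \<noteq> []" "x0 \<noteq> []" using a x0 lenXp by auto
      then show "hd a \<ge> hd x0" using x0 a hd_less_rless by (meson not_le)
    qed
    moreover have "hd x0 > 0" using x0 Xp_def by auto
    ultimately show ?thesis using that by blast
  qed
  have Xphd: "\<forall>a\<in>Xp. hd a \<ge> d \<and> length a = Suc m" using d lenXp by auto
  have Zclosed: "set L \<subseteq> {x. \<exists>t. x = 0 # t \<and> t \<in> X0} \<Longrightarrow> vsum (Suc m) L \<in> Z" for L
  proof (induction L)
    case Nil then show ?case by (simp add: Z_def)
  next
    case (Cons a L)
    then obtain t where t: "a = 0 # t" "t \<in> X0" by auto
    have lt: "length t = m" using t lenX0 by auto
    have "vsum (Suc m) L \<in> Z" using Cons by auto
    then consider "vsum (Suc m) L = replicate (Suc m) 0" | t' where "t' \<in> rgen X0" "vsum (Suc m) L = 0 # t'"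
      unfolding Z_def by auto
    then show ?case
    proof cases
      case 1 then show ?thesis using t lt by (simp add: vadd_zeros Z_def rgen.gen)
    next
      case 2 then show ?thesis using t by (simp add: Z_def rgen.gen rgen.add)
    qed
  qed
  show ?case unfolding rwo_chain
  proof
    assume "\<exists>f. \<forall>i. f i \<in> rgen X \<and> rless (f (Suc i)) (f i)"
    then obtain f where f: "\<forall>i. f i \<in> rgen X" "\<forall>i. rless (f (Suc i)) (f i)" by blast
    define R where "R = hd (f 0)"
    define N where "N = nat \<lceil>R / d\<rceil>"
    have fin: "f i \<in> (\<Union>j\<le>N. vpow Xp j Z)" for i
    proof -
      have hdR: "hd (f i) \<le> R"
      proof (cases "i = 0")
        case True then show ?thesis by (simp add: R_def)
      next
        case False then show ?thesis using chain_trans[OF f(2), of 0 i] rless_hd_le R_def by auto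
      qed
      obtain L where L: "L \<noteq> []" "set L \<subseteq> X" "f i = vsum (Suc m) L"
        using rgen_vsum[OF lenX] f(1) by blast
      have lenL: "set L \<subseteq> {x. length x = Suc m}" using L lenX by auto
      define P where "P = (\<lambda>x::real list. 0 < hd x)"
      have eq: "f i = vadd (vsum (Suc m) (filter P L)) (vsum (Suc m) (filter (\<lambda>x. \<not> P x) L))"
        using vsum_filter[OF lenL, of P] L(3) by simp
      have "set (filter (\<lambda>x. \<not> P x) L) \<subseteq> {x. \<exists>t. x = 0 # t \<and> t \<in> X0}"
        using L Xform unfolding P_def Xp_def by auto
      then have zZ: "vsum (Suc m) (filter (\<lambda>x. \<not> P x) L) \<in> Z" by (rule Zclosed)
      have "set (filter P L) \<subseteq> Xp" using L unfolding P_def Xp_def by auto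
      then have mem: "f i \<in> vpow Xp (length (filter P L)) Z"
        using vsum_vpow[OF _ lenXp zZ] eq lenZ zZ by auto
      have "real (length (filter P L)) * d \<le> hd (f i)"
        using vpow_hd[OF Xphd Zhd mem] by blast
      then have "real (length (filter P L)) * d \<le> R" using hdR by linarith
      then have "real (length (filter P L)) \<le> R / d" using d(1) by (simp add: field_simps)
      then have "length (filter P L) \<le> N" unfolding N_def by linarith
      then show ?thesis using mem by blast
    qed
    have "rwo (\<Union>j\<le>N. vpow Xp j Z)"
      by (rule rwo_UN[where n="Suc m"]) (use vpow_rwo[OF lenXp lenZ rwoXp rwoZ] vpow_len[OF lenXp lenZ] in auto)
    then show False using fin f(2) unfolding rwo_chain by blast
  qed
qed



definition phi :: "pt \<Rightarrow> real list" where
  "phi p = fst p # map real_of_int (snd p)"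

definition sh :: "pt \<Rightarrow> pt" where
  "sh p = (fst p - 1, snd p)"

definition cv :: "nat \<Rightarrow> real \<Rightarrow> real list" where
  "cv k r = r # replicate k 0"

lemma length_phi[simp]: "length (phi p) = Suc (length (snd p))" by (simp add: phi_def)

lemma vlex_Nil: "\<not> vlex_less [] w" by (simp add: vlex_less_def)

lemma vlex_Cons: "vlex_less (a#v) (b#w) \<longleftrightarrow> a < b \<or> (a = b \<and> vlex_less v w)"
proof
  assume "vlex_less (a#v) (b#w)"
  then obtain i where i: "i < Suc (length v)" "take i (a#v) = take i (b#w)" "(a#v) ! i < (b#w) ! i"
    by (auto simp: vlex_less_def)
  show "a < b \<or> (a = b \<and> vlex_less v w)"
  proof (cases i)
    case 0 then show ?thesis using i by simp
  next
    case (Suc j) then show ?thesis using i unfolding vlex_less_def by auto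
  qed
next
  assume h: "a < b \<or> (a = b \<and> vlex_less v w)"
  show "vlex_less (a#v) (b#w)"
  proof (cases "a < b")
    case True then show ?thesis unfolding vlex_less_def by (intro exI[of _ 0]) auto
  next
    case False
    then obtain j where "j < length v" "take j v = take j w" "v ! j < w ! j" "a = b"
      using h unfolding vlex_less_def by auto
    then show ?thesis unfolding vlex_less_def by (intro exI[of _ "Suc j"]) auto
  qed
qed

lemma vlex_rless: "length v = length w \<Longrightarrow>
   vlex_less v w \<longleftrightarrow> rless (map real_of_int v) (map real_of_int w)"
proof (induction v arbitrary: w)
  case Nil then show ?case by (simp add: vlex_Nil)
next
  case (Cons a v)
  then obtain b w' where w: "w = b # w'" by (cases w) auto
  show ?case using Cons.prems Cons.IH[of w'] unfolding w by (simp add: vlex_Cons)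
qed

lemma lex_phi: "length (snd p) = length (snd q) \<Longrightarrow> lex_less p q \<longleftrightarrow> rless (phi p) (phi q)"
  unfolding lex_less_def phi_def using vlex_rless[of "snd p" "snd q"] by auto

lemma phi_inj: "phi p = phi q \<Longrightarrow> p = q"
  unfolding phi_def by (auto simp: prod_eq_iff inj_map_eq_map inj_on_def)

lemma phi_padd: "phi (padd p q) = vadd (phi p) (phi q)"
proof -
  have "map real_of_int (map2 (+) v w) = vadd (map real_of_int v) (map real_of_int w)" for v w :: "int list"
  proof (induction v arbitrary: w)
    case Nil then show ?case by simp
  next
    case (Cons a v) then show ?case by (cases w) auto
  qed
  then show ?thesis by (simp add: phi_def padd_def)
qed

lemma phi_zero: "phi (0, zvec k) = replicate (Suc k) 0"
  by (simp add: phi_def zvec_def)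

lemma phi_psum: "phi (psum k zs) = vsum (Suc k) (map phi zs)"
  by (induction zs) (auto simp: psum_def phi_padd phi_zero)

lemma vadd_cv: "vadd (cv k a) (cv k b) = cv k (a + b)"
  by (simp add: cv_def vadd_zeros)

lemma phi_shift: "length (snd p) = k \<Longrightarrow> phi (fst p - r, snd p) = vadd (phi p) (cv k (- r))"
  by (simp add: phi_def cv_def vadd_zeros)

lemma phi_sh: "length (snd p) = k \<Longrightarrow> phi (sh p) = vadd (phi p) (cv k (- 1))"
  using phi_shift[of p k 1] by (simp add: sh_def)

lemma map2_minus_zvec: "length v = k \<Longrightarrow> map2 (-) v (zvec k) = v"
  by (induction v arbitrary: k) (auto simp: zvec_def)

lemma map2_plus_zvec: "length v = k \<Longrightarrow> map2 (+) v (zvec k) = v"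
  by (induction v arbitrary: k) (auto simp: zvec_def)

lemma length_psum: "\<forall>z\<in>set zs. length (snd z) = k \<Longrightarrow> length (snd (psum k zs)) = k"
  by (induction zs) (auto simp: psum_def padd_def zvec_def)

lemma fst_psum: "fst (psum k zs) = sum_list (map fst zs)"
  by (induction zs) (auto simp: psum_def padd_def)

lemma psub_eq: "length (snd q) = k \<Longrightarrow> psub q (r, zvec k) = (fst q - r, snd q)"
  by (simp add: psub_def map2_minus_zvec)

lemma sum_vsum_shift:
  assumes "\<forall>z\<in>set zs. length (snd z) = k"
  shows "vsum (Suc k) (map (\<lambda>z. phi (sh z)) zs) = vadd (vsum (Suc k) (map phi zs)) (cv k (- real (length zs)))"
  using assms
proof (induction zs)
  case Nil then show ?case by (simp add: cv_def vadd_zeros)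
next
  case (Cons z zs)
  have lz: "length (phi z) = Suc k" using Cons.prems by simp
  have ls: "length (vsum (Suc k) (map phi zs)) = Suc k"
    using Cons.prems by (intro length_vsum) auto
  have "vsum (Suc k) (map (\<lambda>z. phi (sh z)) (z # zs))
      = vadd (vadd (phi z) (cv k (-1))) (vadd (vsum (Suc k) (map phi zs)) (cv k (- real (length zs))))"
    using Cons by (simp add: phi_sh)
  also have "\<dots> = vadd (vadd (phi z) (vsum (Suc k) (map phi zs))) (vadd (cv k (-1)) (cv k (- real (length zs))))"
    by (rule vadd_swap)
  also have "\<dots> = vadd (vsum (Suc k) (map phi (z # zs))) (cv k (- real (length (z # zs))))"
    by (simp add: vadd_cv)
  finally show ?case .
qed

definition oplus :: "nat \<Rightarrow> pt list \<Rightarrow> pt" where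
  "oplus k zs = psub (psum k zs) (real (length zs - 1), zvec k)"

lemma oplus_len: "\<forall>z\<in>set zs. length (snd z) = k \<Longrightarrow> length (snd (oplus k zs)) = k"
  by (simp add: oplus_def psub_eq length_psum)

lemma oplus_phi:
  assumes "zs \<noteq> []" "\<forall>z\<in>set zs. length (snd z) = k"
  shows "phi (sh (oplus k zs)) = vsum (Suc k) (map (\<lambda>z. phi (sh z)) zs)"
proof -
  have lp: "length (snd (psum k zs)) = k" using assms length_psum by blast
  have ls: "length (vsum (Suc k) (map phi zs)) = Suc k"
    using assms by (intro length_vsum) auto
  have "phi (sh (oplus k zs)) = vadd (vadd (phi (psum k zs)) (cv k (- real (length zs - 1)))) (cv k (-1))"
    unfolding oplus_def psub_eq[OF lp] using lp by (simp add: phi_sh phi_shift)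
  also have "\<dots> = vadd (phi (psum k zs)) (cv k (- real (length zs)))"
  proof -
    have "- real (length zs - 1) + - 1 = - real (length zs)" using assms(1) by (cases zs) auto
    then show ?thesis by (simp add: vadd_assoc vadd_cv)
  qed
  finally show ?thesis using sum_vsum_shift[OF assms(2)] by (simp add: phi_psum)
qed

lemma sh_inj: "sh p = sh q \<Longrightarrow> p = q" by (simp add: sh_def prod_eq_iff)

lemma eq_by_phi_sh: "phi (sh p) = phi (sh q) \<Longrightarrow> p = q"
  using phi_inj sh_inj by blast



lemma lexwo_rwo:
  assumes wo: "lex_wellordered S" and len: "S \<subseteq> {p. length (snd p) = k}"
  shows "rwo (phi ` S)"
proof (rule rwo_from_min)
  fix T t0 assume T: "T \<subseteq> phi ` S" "t0 \<in> T"
  define T' where "T' = {p\<in>S. phi p \<in> T}"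
  obtain p0 where "p0 \<in> S" "t0 = phi p0" using T by auto
  then have "p0 \<in> T'" using T unfolding T'_def by blast
  then have "T' \<subseteq> S" "T' \<noteq> {}" unfolding T'_def by blast+
  then obtain t where t: "t \<in> T'" "\<forall>u\<in>T'. lex_le t u" using wo unfolding lex_wellordered_def by blast
  have "\<forall>u\<in>T. \<not> rless u (phi t)"
  proof
    fix u assume u: "u \<in> T"
    then obtain q where q: "q \<in> S" "u = phi q" using T by auto
    then have "q \<in> T'" using u T'_def by auto
    then have "lex_le t q" using t by blast
    moreover have "length (snd t) = length (snd q)" using q t len T'_def by auto
    ultimately have "phi t = phi q \<or> rless (phi t) (phi q)" unfolding lex_le_def using lex_phi by auto
    then show "\<not> rless u (phi t)" using q rless_irrefl rless_asym by auto
  qed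
  moreover have "phi t \<in> T" using t T'_def by auto
  ultimately show "\<exists>t\<in>T. \<forall>u\<in>T. \<not> rless u t" by blast
qed

lemma rwo_lexwo:
  assumes wo: "rwo (phi ` S)" and len: "S \<subseteq> {p. length (snd p) = k}"
  shows "lex_wellordered S"
  unfolding lex_wellordered_def
proof (intro allI impI)
  fix T assume T: "T \<subseteq> S" "T \<noteq> {}"
  then obtain t0 where "t0 \<in> T" by blast
  then have "phi t0 \<in> phi ` T" by blast
  from rwo_min[OF wo _ this] T obtain t' where t': "t' \<in> phi ` T" "\<forall>u\<in>phi ` T. \<not> rless u t'" by blast
  then obtain t where t: "t \<in> T" "t' = phi t" by blast
  have "\<forall>u\<in>T. lex_le t u"
  proof
    fix u assume u: "u \<in> T"
    have lens: "length (snd t) = length (snd u)" using t u T len by auto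
    show "lex_le t u"
    proof (cases "u = t")
      case True then show ?thesis by (simp add: lex_le_def)
    next
      case False
      then have "phi u \<noteq> phi t" using phi_inj by blast
      moreover have "phi u \<in> phi ` T" using u by blast
      then have "\<not> rless (phi u) (phi t)" using t' t by auto
      ultimately have "rless (phi t) (phi u)" using rless_total[of "phi t" "phi u"] lens by auto
      then show ?thesis using lex_phi lens unfolding lex_le_def by blast
    qed
  qed
  then show "\<exists>t\<in>T. \<forall>u\<in>T. lex_le t u" using t by blast
qed

lemma rwo_translate:
  assumes "rwo S" "S \<subseteq> {x. length x = n}" "length v = n"
  shows "rwo ((\<lambda>x. vadd x v) ` S)"
proof (rule rwo_image[OF _ assms(1)])
  fix x y assume h: "x \<in> S" "y \<in> S" "rless (vadd x v) (vadd y v)"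
  have "length x = n" "length y = n" using h assms by auto
  then show "rless x y" using rless_add_cancel[OF h(3)] assms(3) by simp
qed

lemma pos_phi: "length (snd p) = k \<Longrightarrow> lex_less (0, zvec k) p \<longleftrightarrow> rless (replicate (Suc k) 0) (phi p)"
  using lex_phi[of "(0, zvec k)" p] by (simp add: zvec_def phi_def)

lemma rpos_add: "rless (replicate n 0) a \<Longrightarrow> rless (replicate n 0) b \<Longrightarrow> length a = n \<Longrightarrow> length b = n
  \<Longrightarrow> rless (replicate n 0) (vadd a b)"
proof -
  assume h: "rless (replicate n 0) a" "rless (replicate n 0) b" "length a = n" "length b = n"
  have "rless (vadd (replicate n 0) b) (vadd a b)" by (rule rless_add[OF h(1)]) (use h in auto)
  then have "rless b (vadd a b)" using h vadd_zeros2 by simp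
  then show ?thesis using h(2) rless_trans by blast
qed

lemma rgen_pos: "X \<subseteq> {v. length v = n \<and> rless (replicate n 0) v} \<Longrightarrow> x \<in> rgen X \<Longrightarrow>
   length x = n \<and> rless (replicate n 0) x"
  by (erule rgen.induct) (auto intro: rpos_add)

lemma vsum_rgen: "L \<noteq> [] \<Longrightarrow> set L \<subseteq> rgen X \<Longrightarrow> X \<subseteq> {x. length x = n} \<Longrightarrow> vsum n L \<in> rgen X"
proof (induction L)
  case Nil then show ?case by simp
next
  case (Cons a L)
  show ?case
  proof (cases "L = []")
    case True
    have "a \<in> rgen X" using Cons.prems by simp
    then have "length a = n" using rgen_len[OF Cons.prems(3)] by blast
    then show ?thesis using True Cons.prems by (simp add: vadd_zeros)
  next
    case False then show ?thesis using Cons by (auto intro: rgen.add)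
  qed
qed

lemma sum_fst_gt: "\<forall>x\<in>set xs. fst x > (1::real) \<Longrightarrow> xs \<noteq> [] \<Longrightarrow> sum_list (map fst xs) > real (length xs)"
proof (induction xs)
  case Nil then show ?case by simp
next
  case (Cons a xs) then show ?case by (cases "xs = []") auto
qed

lemma sum_fst_ge: "\<forall>x\<in>set xs. fst x \<ge> (b::real) \<Longrightarrow> sum_list (map fst xs) \<ge> real (length xs) * b"
  by (induction xs) (auto simp: algebra_simps)

lemma fst_oplus: "fst (oplus k zs) = sum_list (map fst zs) - real (length zs - 1)"
  by (simp add: oplus_def psub_def fst_psum)

lemma padd_comm: "padd p q = padd q p"
proof -
  have "map2 (+) v w = map2 (+) w (v :: int list)" for v w
  proof (induction v arbitrary: w)
    case Nil then show ?case by simp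
  next
    case (Cons a v) then show ?case by (cases w) auto
  qed
  then show ?thesis by (simp add: padd_def)
qed

lemma padd_assoc: "padd (padd p q) r = padd p (padd q r)"
proof -
  have "map2 (+) (map2 (+) u v) w = map2 (+) u (map2 (+) v (w :: int list))" for u v w
  proof (induction u arbitrary: v w)
    case Nil then show ?case by simp
  next
    case (Cons a u) then show ?case by (cases v; cases w) auto
  qed
  then show ?thesis by (simp add: padd_def)
qed

lemma length_padd: "length (snd (padd p q)) = min (length (snd p)) (length (snd q))"
  by (simp add: padd_def)

lemma fst_padd: "fst (padd p q) = fst p + fst q" by (simp add: padd_def)

locale setting =
  fixes k :: nat and c :: "pt \<Rightarrow> real" and lam :: real
  assumes inLk: "in_Lk k c" and lead: "leading_lambda_z k c lam"
begin

abbreviation W where "W n \<equiv> Wseq k c lam n"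

definition e :: pt where "e = (1, zvec k)"

lemma supp_props: "p \<in> supp c \<Longrightarrow> length (snd p) = k \<and> fst p \<ge> 1 \<and> (p = e \<or> lex_less e p)"
proof -
  assume p: "p \<in> supp c"
  have "length (snd p) = k" using inLk p unfolding in_Lk_def by auto
  moreover have "lex_le e p" using lead p unfolding leading_lambda_z_def e_def by auto
  moreover then have "fst p \<ge> 1" unfolding lex_le_def lex_less_def e_def by auto
  ultimately show ?thesis unfolding lex_le_def by auto
qed

lemma minus_supp: "p \<in> supp (minus_lin k c lam) \<Longrightarrow> p \<in> supp c \<and> p \<noteq> e"
proof -
  assume p: "p \<in> supp (minus_lin k c lam)"
  have ce: "c e = lam" using lead unfolding leading_lambda_z_def e_def by simp
  have "p \<noteq> e" using p ce unfolding supp_def minus_lin_def e_def by auto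
  then show ?thesis using p unfolding supp_def minus_lin_def e_def by auto
qed

lemma pos_fst: "fst p > 0 \<Longrightarrow> lex_less (0, zvec k) p" by (simp add: lex_less_def)

lemma G_props: "g \<in> W1_gens k c lam \<Longrightarrow> length (snd g) = k \<and> fst g \<ge> 0 \<and> lex_less (0, zvec k) g"
proof -
  assume g: "g \<in> W1_gens k c lam"
  then consider "g \<in> supp c" | p where "p \<in> supp (minus_lin k c lam)" "g = (fst p - 1, snd p)"
    | i where "i < k" "g = unitvec k i"
    unfolding W1_gens_def by auto
  then show ?thesis
  proof cases
    case 1
    have "length (snd g) = k" "fst g \<ge> 1" using supp_props[OF 1] by auto
    then show ?thesis using pos_fst[of g] by auto
  next
    case 2
    have "p \<noteq> e" "p \<in> supp c" using minus_supp 2 by auto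
    then have "length (snd p) = k" "lex_less e p" using supp_props[of p] by auto
    then show ?thesis using 2 unfolding lex_less_def e_def by auto
  next
    case 3
    have "vlex_less (zvec k) ((replicate k 0)[i := 1])"
      unfolding vlex_less_def zvec_def using 3 by (intro exI[of _ i]) auto
    then show ?thesis using 3 unfolding unitvec_def lex_less_def zvec_def by auto
  qed
qed

lemma W0_props: "p \<in> W 0 \<Longrightarrow> length (snd p) = k \<and> fst p \<ge> 0 \<and> lex_less (0, zvec k) p"
proof -
  assume "p \<in> W 0"
  then have "p \<in> semigroup_gen (W1_gens k c lam)" by simp
  then show ?thesis
  proof (induction rule: semigroup_gen.induct)
    case (gen x) then show ?case using G_props by blast
  next
    case (add x y)
    have l: "length (snd (padd x y)) = k" using add by (simp add: length_padd)
    have lx: "length (snd x) = k" "lex_less (0,zvec k) x" "length (snd y) = k" "lex_less (0,zvec k) y"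
      using add.IH by auto
    have "rless (replicate (Suc k) 0) (phi x)" "rless (replicate (Suc k) 0) (phi y)"
      using pos_phi[OF lx(1)] pos_phi[OF lx(3)] lx by auto
    then have "rless (replicate (Suc k) 0) (phi (padd x y))"
      using rpos_add[of "Suc k" "phi x" "phi y"] lx by (simp add: phi_padd)
    then have "lex_less (0, zvec k) (padd x y)" using pos_phi[OF l] by simp
    then show ?case using l add.IH by (simp add: fst_padd)
  qed
qed

definition Xpt :: "pt set" where
  "Xpt = sh ` {q \<in> W 0. fst q > 1} \<union> W 0 \<union> {e}"

lemma phi_e: "phi e = cv k 1" by (simp add: phi_def e_def cv_def zvec_def)

lemma Xpt_props: "rwo (phi ` Xpt) \<and> phi ` Xpt \<subseteq> {v. length v = Suc k \<and> rless (replicate (Suc k) 0) v}"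
proof -
  define G where "G = W1_gens k c lam"
  define U where "U = {unitvec k i | i. i < k}"
  have GU: "G \<subseteq> supp c \<union> sh ` supp c \<union> U"
  proof
    fix g assume "g \<in> G"
    then consider "g \<in> supp c" | p where "p \<in> supp (minus_lin k c lam)" "g = (fst p - 1, snd p)"
      | "g \<in> U" unfolding G_def W1_gens_def U_def by auto
    then show "g \<in> supp c \<union> sh ` supp c \<union> U"
    proof cases
      case 2
      then have "p \<in> supp c" using minus_supp by blast
      then show ?thesis using 2 unfolding sh_def by auto
    qed auto
  qed
  have lsupp: "supp c \<subseteq> {p. length (snd p) = k}" using supp_props by auto
  have r1: "rwo (phi ` supp c)" using lexwo_rwo[OF _ lsupp] inLk unfolding in_Lk_def by blast
  have l1: "phi ` supp c \<subseteq> {x. length x = Suc k}" using lsupp by auto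
  have "phi ` sh ` supp c = (\<lambda>p. vadd (phi p) (cv k (-1))) ` supp c"
    unfolding image_image by (rule image_cong) (use lsupp phi_sh in auto)
  also have "\<dots> = (\<lambda>x. vadd x (cv k (-1))) ` phi ` supp c" by (simp add: image_image)
  finally have "phi ` sh ` supp c = (\<lambda>x. vadd x (cv k (-1))) ` phi ` supp c" .
  moreover have "rwo ((\<lambda>x. vadd x (cv k (-1))) ` phi ` supp c)"
    by (rule rwo_translate[OF r1 l1]) (simp add: cv_def)
  ultimately have r2: "rwo (phi ` sh ` supp c)" by simp
  have l2: "phi ` sh ` supp c \<subseteq> {x. length x = Suc k}" using lsupp by (auto simp: sh_def)
  have Ueq: "U = unitvec k ` {..<k}" unfolding U_def by auto
  have l3: "phi ` U \<subseteq> {x. length x = Suc k}" unfolding U_def unitvec_def by auto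
  have r3: "rwo (phi ` U)" by (rule rwo_finite[OF _ l3]) (simp add: Ueq)
  have "rwo (phi ` supp c \<union> phi ` sh ` supp c \<union> phi ` U)"
    by (intro rwo_union[where n="Suc k"] r1 r2 r3) (use l1 l2 l3 in auto)
  then have rG: "rwo (phi ` G)" by (rule rwo_subset) (use GU in auto)
  have pG: "phi ` G \<subseteq> {v. length v = Suc k \<and> rless (replicate (Suc k) 0) v}"
    using G_props pos_phi unfolding G_def by force
  have rgG: "rwo (rgen (phi ` G))" by (rule neumann[OF pG rG])
  have W0sub: "phi ` W 0 \<subseteq> rgen (phi ` G)"
  proof
    fix v assume "v \<in> phi ` W 0"
    then obtain p where p: "p \<in> semigroup_gen G" "v = phi p" by (auto simp: G_def)
    have "phi p \<in> rgen (phi ` G)" using p(1)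
      by (induction rule: semigroup_gen.induct) (auto simp: phi_padd intro: rgen.intros)
    then show "v \<in> rgen (phi ` G)" using p by simp
  qed
  have rW0: "rwo (phi ` W 0)" using rwo_subset[OF rgG W0sub] .
  have pW0: "phi ` W 0 \<subseteq> {v. length v = Suc k \<and> rless (replicate (Suc k) 0) v}"
    using W0_props pos_phi by force
  define A where "A = {q \<in> W 0. fst q > 1}"
  have "phi ` sh ` A = (\<lambda>p. vadd (phi p) (cv k (-1))) ` A"
    unfolding image_image by (rule image_cong) (use W0_props phi_sh in \<open>auto simp: A_def\<close>)
  also have "\<dots> = (\<lambda>x. vadd x (cv k (-1))) ` phi ` A" by (simp add: image_image)
  finally have "phi ` sh ` A = (\<lambda>x. vadd x (cv k (-1))) ` phi ` A" .
  moreover have "rwo ((\<lambda>x. vadd x (cv k (-1))) ` phi ` A)"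
  proof (rule rwo_translate[where n="Suc k"])
    have "phi ` A \<subseteq> phi ` W 0" unfolding A_def by blast
    then show "rwo (phi ` A)" "phi ` A \<subseteq> {x. length x = Suc k}" using rwo_subset[OF rW0] pW0 by auto
  qed (simp add: cv_def)
  ultimately have rA: "rwo (phi ` sh ` A)" by simp
  have pA: "phi ` sh ` A \<subseteq> {v. length v = Suc k \<and> rless (replicate (Suc k) 0) v}"
  proof
    fix v assume "v \<in> phi ` sh ` A"
    then obtain q where q: "q \<in> W 0" "fst q > 1" "v = phi (sh q)" unfolding A_def by auto
    have "length (snd q) = k" using W0_props q by auto
    moreover have "lex_less (0, zvec k) (sh q)" using q pos_fst by (simp add: sh_def)
    ultimately show "v \<in> {v. length v = Suc k \<and> rless (replicate (Suc k) 0) v}"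
      using pos_phi[of "sh q"] q by (simp add: sh_def)
  qed
  have pe: "phi ` {e} \<subseteq> {v. length v = Suc k \<and> rless (replicate (Suc k) 0) v}"
    by (simp add: phi_e cv_def)
  have "phi ` Xpt = phi ` sh ` A \<union> phi ` W 0 \<union> {phi e}" unfolding Xpt_def A_def by auto
  moreover have "rwo (phi ` sh ` A \<union> phi ` W 0 \<union> {phi e})"
    by (intro rwo_union[where n="Suc k"] rA rW0 rwo_single) (use pA pW0 pe in auto)
  ultimately show ?thesis using pA pW0 pe by auto
qed

end



context setting
begin

abbreviation R where "R \<equiv> rgen (phi ` Xpt)"

lemma phi_sh_padd1: "length (snd x) = k \<Longrightarrow> length (snd y) = k \<Longrightarrow>
  phi (sh (padd x y)) = vadd (phi (sh x)) (phi y)"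
  by (simp add: phi_sh length_padd phi_padd vadd_assoc vadd_left_comm vadd_comm)

lemma phi_sh_padd2: "length (snd x) = k \<Longrightarrow> length (snd y) = k \<Longrightarrow>
  phi (sh (padd x y)) = vadd (vadd (phi (sh x)) (phi (sh y))) (phi e)"
proof -
  assume l: "length (snd x) = k" "length (snd y) = k"
  have "vadd (phi (sh x)) (phi (sh y)) = vadd (vadd (phi x) (phi y)) (vadd (cv k (-1)) (cv k (-1)))"
    using l by (simp add: phi_sh vadd_swap)
  then have "vadd (vadd (phi (sh x)) (phi (sh y))) (phi e)
      = vadd (vadd (phi x) (phi y)) (vadd (vadd (cv k (-1)) (cv k (-1))) (cv k 1))"
    by (simp add: vadd_assoc phi_e)
  also have "\<dots> = vadd (vadd (phi x) (phi y)) (cv k (-1))" by (simp add: vadd_cv)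
  finally show ?thesis using l by (simp add: phi_sh length_padd phi_padd)
qed

lemma inv: "p \<in> W n \<Longrightarrow> length (snd p) = k \<and> fst p \<ge> 0 \<and> (fst p \<le> 1 \<longrightarrow> p \<in> W 0) \<and>
   (1 < fst p \<longrightarrow> phi (sh p) \<in> R)"
proof (induction n arbitrary: p)
  case 0
  then have "sh p \<in> Xpt \<or> fst p \<le> 1" unfolding Xpt_def by auto
  then show ?case using W0_props 0 by (auto intro: rgen.gen)
next
  case (Suc n)
  have "p \<in> semigroup_gen (W n \<union> {psub (psum k xs) (real (n + 1), zvec k) | xs.
         length xs = n + 2 \<and> (\<forall>x \<in> set xs. x \<in> W n \<and> fst x > 1)})" using Suc.prems by simp
  then show ?case
  proof (induction rule: semigroup_gen.induct)
    case (gen x)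
    then show ?case
    proof
      assume "x \<in> W n" then show ?case using Suc.IH by blast
    next
      assume "x \<in> {psub (psum k xs) (real (n + 1), zvec k) | xs.
         length xs = n + 2 \<and> (\<forall>x \<in> set xs. x \<in> W n \<and> fst x > 1)}"
      then obtain xs where xs: "x = psub (psum k xs) (real (n + 1), zvec k)" "length xs = n + 2"
        "\<forall>y\<in>set xs. y \<in> W n \<and> fst y > 1" by blast
      have ox: "x = oplus k xs" using xs by (simp add: oplus_def)
      have lxs: "\<forall>y\<in>set xs. length (snd y) = k" using xs Suc.IH by blast
      have ne: "xs \<noteq> []" using xs by auto
      have "sum_list (map fst xs) > real (length xs)" using sum_fst_gt xs ne by blast
      moreover have "fst x = sum_list (map fst xs) - real (length xs - 1)" using ox fst_oplus by simp
      ultimately have f: "fst x > 1" using xs by simp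
      have "phi (sh x) = vsum (Suc k) (map (\<lambda>z. phi (sh z)) xs)" using oplus_phi[OF ne lxs] ox by simp
      moreover have "vsum (Suc k) (map (\<lambda>z. phi (sh z)) xs) \<in> R"
      proof (rule vsum_rgen)
        show "map (\<lambda>z. phi (sh z)) xs \<noteq> []" using ne by simp
        show "set (map (\<lambda>z. phi (sh z)) xs) \<subseteq> R" using xs Suc.IH by auto
        show "phi ` Xpt \<subseteq> {x. length x = Suc k}" using Xpt_props by auto
      qed
      ultimately show ?case using f ox oplus_len[OF lxs] by simp
    qed
  next
    case (add x y)
    have lx: "length (snd x) = k" "length (snd y) = k" using add.IH by auto
    have l: "length (snd (padd x y)) = k" using lx by (simp add: length_padd)
    have f: "fst (padd x y) = fst x + fst y" by (simp add: fst_padd)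
    have "fst (padd x y) \<ge> 0" using f add.IH by auto
    moreover have "fst (padd x y) \<le> 1 \<longrightarrow> padd x y \<in> W 0"
    proof
      assume "fst (padd x y) \<le> 1"
      then have "fst x \<le> 1" "fst y \<le> 1" using f add.IH by auto
      then have "x \<in> W 0" "y \<in> W 0" using add.IH by auto
      then show "padd x y \<in> W 0" by (simp add: semigroup_gen.add)
    qed
    moreover have "1 < fst (padd x y) \<longrightarrow> phi (sh (padd x y)) \<in> R"
    proof
      assume gt: "1 < fst (padd x y)"
      have eR: "phi e \<in> R" by (rule rgen.gen) (simp add: Xpt_def)
      have W0R: "q \<in> W 0 \<Longrightarrow> phi q \<in> R" for q by (rule rgen.gen) (simp add: Xpt_def)
      show "phi (sh (padd x y)) \<in> R"
      proof (cases "1 < fst x")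
        case True
        then have sx: "phi (sh x) \<in> R" using add.IH by blast
        show ?thesis
        proof (cases "1 < fst y")
          case True
          then have "phi (sh y) \<in> R" using add.IH by blast
          then show ?thesis using sx eR phi_sh_padd2[OF lx] by (simp add: rgen.add)
        next
          case False
          then have "y \<in> W 0" using add.IH by auto
          then show ?thesis using sx W0R phi_sh_padd1[OF lx] by (simp add: rgen.add)
        qed
      next
        case False
        then have x0: "x \<in> W 0" using add.IH by auto
        show ?thesis
        proof (cases "1 < fst y")
          case True
          then have "phi (sh y) \<in> R" using add.IH by blast
          moreover have "padd x y = padd y x" by (rule padd_comm)
          ultimately show ?thesis using x0 W0R phi_sh_padd1[OF lx(2) lx(1)] by (simp add: rgen.add)
        next
          case False
          then have "y \<in> W 0" using add.IH by auto
          then have "padd x y \<in> W 0" using x0 by (simp add: semigroup_gen.add)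
          then have "sh (padd x y) \<in> Xpt" using gt unfolding Xpt_def by auto
          then show ?thesis by (simp add: rgen.gen)
        qed
      qed
    qed
    ultimately show ?case using l by blast
  qed
qed

lemma Wall_inv: "p \<in> Wall k c lam \<Longrightarrow> length (snd p) = k \<and> fst p \<ge> 0 \<and> (1 < fst p \<longrightarrow> phi (sh p) \<in> R)"
  unfolding Wall_def using inv by blast

lemma wellordered: assumes "\<beta> > 1" shows "lex_wellordered (Wbeta k c lam \<beta>)"
proof -
  have lW: "Wbeta k c lam \<beta> \<subseteq> {p. length (snd p) = k}" using Wall_inv unfolding Wbeta_def by auto
  have lR: "R \<subseteq> {x. length x = Suc k}" using rgen_len Xpt_props by blast
  have rR: "rwo R" using neumann Xpt_props by blast
  have "phi ` Wbeta k c lam \<beta> \<subseteq> (\<lambda>x. vadd x (cv k 1)) ` R"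
  proof
    fix v assume "v \<in> phi ` Wbeta k c lam \<beta>"
    then obtain p where p: "p \<in> Wall k c lam" "fst p \<ge> \<beta>" "v = phi p" unfolding Wbeta_def by auto
    then have l: "length (snd p) = k" and s: "phi (sh p) \<in> R" using Wall_inv assms by auto
    have "phi p = vadd (phi (sh p)) (cv k 1)"
    proof -
      have "vadd (phi p) (replicate (Suc k) 0) = phi p" using l vadd_zeros[of "phi p" "Suc k"] by simp
      moreover have "cv k 0 = replicate (Suc k) 0" by (simp add: cv_def)
      ultimately show ?thesis using l by (simp add: phi_sh vadd_assoc vadd_cv del: replicate.simps)
    qed
    then show "v \<in> (\<lambda>x. vadd x (cv k 1)) ` R" using s p by auto
  qed
  moreover have "rwo ((\<lambda>x. vadd x (cv k 1)) ` R)" by (rule rwo_translate[OF rR lR]) (simp add: cv_def)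
  ultimately have "rwo (phi ` Wbeta k c lam \<beta>)" by (rule rwo_subset[rotated])
  then show ?thesis using rwo_lexwo lW by blast
qed

end



lemma V_append:
  assumes "\<forall>z\<in>set (A @ B). length (snd z) = k"
  shows "vsum (Suc k) (map (\<lambda>z. phi (sh z)) (A @ B)) =
    vadd (vsum (Suc k) (map (\<lambda>z. phi (sh z)) A)) (vsum (Suc k) (map (\<lambda>z. phi (sh z)) B))"
proof -
  have len: "\<And>z. z \<in> set A \<union> set B \<Longrightarrow> length (phi (sh z)) = Suc k" using assms by (simp add: sh_def)
  have "set (map (\<lambda>z. phi (sh z)) A) \<union> set (map (\<lambda>z. phi (sh z)) B) \<subseteq> {x. length x = Suc k}"
    unfolding set_map using len by blast
  then show ?thesis by (simp add: vsum_append[symmetric])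
qed

context setting
begin

lemma W_mono_Suc: "W n \<subseteq> W (Suc n)"
  by (auto intro: semigroup_gen.gen)

lemma W_mono: "m \<le> n \<Longrightarrow> W m \<subseteq> W n"
  using lift_Suc_mono_le[of W, OF W_mono_Suc] by blast

lemma W_add: "x \<in> W n \<Longrightarrow> y \<in> W n \<Longrightarrow> padd x y \<in> W n"
  by (cases n) (auto intro: semigroup_gen.add)

lemma Wall_add: assumes "x \<in> Wall k c lam" "y \<in> Wall k c lam" shows "padd x y \<in> Wall k c lam"
proof -
  obtain a b where "x \<in> W a" "y \<in> W b" using assms unfolding Wall_def by blast
  then have "x \<in> W (max a b)" "y \<in> W (max a b)" using W_mono by (meson max.cobounded1 max.cobounded2 subsetD)+
  then show ?thesis unfolding Wall_def using W_add by blast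
qed

lemma W_len: "x \<in> W n \<Longrightarrow> length (snd x) = k" using inv by blast

lemma list_level: "set xs \<subseteq> Wall k c lam \<Longrightarrow> \<exists>N. set xs \<subseteq> W N"
proof (induction xs)
  case Nil then show ?case by simp
next
  case (Cons x xs)
  then obtain N a where "set xs \<subseteq> W N" "x \<in> W a" unfolding Wall_def by auto
  then have "set (x # xs) \<subseteq> W (max N a)" using W_mono
    by (metis (no_types, lifting) insert_subset list.simps(15) max.cobounded1 max.cobounded2 subset_trans subsetD)
  then show ?case by blast
qed

lemma oplus_in: "set ys \<subseteq> W j \<Longrightarrow> \<forall>y\<in>set ys. 1 < fst y \<Longrightarrow> length ys = j + 2 \<Longrightarrow> oplus k ys \<in> W (Suc j)"
proof -
  assume h: "set ys \<subseteq> W j" "\<forall>y\<in>set ys. 1 < fst y" "length ys = j + 2"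
  have "oplus k ys = psub (psum k ys) (real (j + 1), zvec k)" using h(3) by (simp add: oplus_def)
  then have "oplus k ys \<in> {psub (psum k xs) (real (j + 1), zvec k) | xs.
         length xs = j + 2 \<and> (\<forall>x \<in> set xs. x \<in> W j \<and> fst x > 1)}" using h by blast
  then show ?thesis by (auto intro: semigroup_gen.gen)
qed

lemma base: "set zs \<subseteq> W N \<Longrightarrow> \<forall>z\<in>set zs. 1 < fst z \<Longrightarrow> N + 2 \<le> length zs \<Longrightarrow> oplus k zs \<in> Wall k c lam"
proof -
  assume h: "set zs \<subseteq> W N" "\<forall>z\<in>set zs. 1 < fst z" "N + 2 \<le> length zs"
  define j where "j = length zs - 2"
  have "N \<le> j" unfolding j_def using h(3) by simp
  then have "set zs \<subseteq> W j" using h(1) W_mono by blast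
  moreover have lj: "length zs = j + 2" unfolding j_def using h(3) by simp
  ultimately have "oplus k zs \<in> W (Suc j)" using oplus_in h(2) by blast
  then show ?thesis unfolding Wall_def by blast
qed

lemma decomp: "z \<in> W (Suc N) \<Longrightarrow> z \<in> W N \<or> (\<exists>ys. set ys \<subseteq> W N \<and> (\<forall>y\<in>set ys. 1 < fst y) \<and> length ys = N + 2
   \<and> (z = oplus k ys \<or> (\<exists>r\<in>Wall k c lam. z = padd (oplus k ys) r)))"
proof -
  assume "z \<in> W (Suc N)"
  then have z: "z \<in> semigroup_gen (W N \<union> {psub (psum k xs) (real (N + 1), zvec k) | xs.
         length xs = N + 2 \<and> (\<forall>x \<in> set xs. x \<in> W N \<and> fst x > 1)})" by simp
  have inW: "x \<in> semigroup_gen (W N \<union> {psub (psum k xs) (real (N + 1), zvec k) | xs.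
         length xs = N + 2 \<and> (\<forall>x \<in> set xs. x \<in> W N \<and> fst x > 1)}) \<Longrightarrow> x \<in> Wall k c lam" for x
    unfolding Wall_def by (rule UN_I[of "Suc N"]) auto
  from z show ?thesis
  proof (induction rule: semigroup_gen.induct)
    case (gen x)
    then show ?case
    proof
      assume "x \<in> W N" then show ?case by blast
    next
      assume "x \<in> {psub (psum k xs) (real (N + 1), zvec k) | xs.
         length xs = N + 2 \<and> (\<forall>x \<in> set xs. x \<in> W N \<and> fst x > 1)}"
      then obtain xs where xs: "x = psub (psum k xs) (real (N + 1), zvec k)" "length xs = N + 2"
        "\<forall>y\<in>set xs. y \<in> W N \<and> fst y > 1" by blast
      then have "x = oplus k xs" by (simp add: oplus_def)
      then show ?case using xs by blast
    qed
  next
    case (add x y)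
    have xW: "x \<in> Wall k c lam" and yW: "y \<in> Wall k c lam" using add.hyps inW by auto
    show ?case
    proof (cases "x \<in> W N")
      case xN: True
      show ?thesis
      proof (cases "y \<in> W N")
        case True then show ?thesis using xN W_add by blast
      next
        case False
        then obtain ys where ys: "set ys \<subseteq> W N" "\<forall>y\<in>set ys. 1 < fst y" "length ys = N + 2"
          "y = oplus k ys \<or> (\<exists>r\<in>Wall k c lam. y = padd (oplus k ys) r)" using add.IH by blast
        have "\<exists>r\<in>Wall k c lam. padd x y = padd (oplus k ys) r"
        proof (cases "y = oplus k ys")
          case True then show ?thesis using xW padd_comm by blast
        next
          case False
          then obtain r where r: "r \<in> Wall k c lam" "y = padd (oplus k ys) r" using ys by blast
          have "padd x y = padd (oplus k ys) (padd x r)" using r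
            by (metis padd_assoc padd_comm)
          then show ?thesis using Wall_add[OF xW r(1)] by blast
        qed
        then show ?thesis using ys by blast
      qed
    next
      case False
      then obtain ys where ys: "set ys \<subseteq> W N" "\<forall>y\<in>set ys. 1 < fst y" "length ys = N + 2"
        "x = oplus k ys \<or> (\<exists>r\<in>Wall k c lam. x = padd (oplus k ys) r)" using add.IH by blast
      have "\<exists>r\<in>Wall k c lam. padd x y = padd (oplus k ys) r"
      proof (cases "x = oplus k ys")
        case True then show ?thesis using yW by blast
      next
        case False
        then obtain r where r: "r \<in> Wall k c lam" "x = padd (oplus k ys) r" using ys by blast
        have "padd x y = padd (oplus k ys) (padd r y)" using r by (simp add: padd_assoc)
        then show ?thesis using Wall_add[OF r(1) yW] by blast
      qed
      then show ?thesis using ys by blast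
    qed
  qed
qed

lemma Wall_len: "x \<in> Wall k c lam \<Longrightarrow> length (snd x) = k" using Wall_inv by blast

lemma stepB:
  assumes IHN: "\<And>zs. set zs \<subseteq> W N \<Longrightarrow> \<forall>z\<in>set zs. 1 < fst z \<Longrightarrow> 2 \<le> length zs \<Longrightarrow> oplus k zs \<in> Wall k c lam"
  shows "set zs \<subseteq> W (Suc N) \<Longrightarrow> \<forall>z\<in>set zs. 1 < fst z \<Longrightarrow> set ws \<subseteq> W N \<Longrightarrow> \<forall>w\<in>set ws. 1 < fst w
    \<Longrightarrow> 2 \<le> length ws + length zs \<Longrightarrow> oplus k (ws @ zs) \<in> Wall k c lam"
proof (induction zs arbitrary: ws)
  case Nil then show ?case using IHN by simp
next
  case (Cons z zs)
  define F where "F = (\<lambda>z. phi (sh z))"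
  define V where "V = (\<lambda>L. vsum (Suc k) (map F L))"
  have "z \<in> W (Suc N)" using Cons.prems(1) by simp
  then have lz: "length (snd z) = k" by (rule W_len)
  have lzs: "\<forall>x\<in>set zs. length (snd x) = k"
  proof
    fix x assume "x \<in> set zs"
    then have "x \<in> W (Suc N)" using Cons.prems(1) by auto
    then show "length (snd x) = k" by (rule W_len)
  qed
  have lws: "\<forall>x\<in>set ws. length (snd x) = k"
  proof
    fix x assume "x \<in> set ws"
    then have "x \<in> W N" using Cons.prems(3) by auto
    then show "length (snd x) = k" by (rule W_len)
  qed
  have lall: "\<forall>x\<in>set (ws @ z # zs). length (snd x) = k" using lz lzs lws by auto
  have Vapp: "\<forall>x\<in>set (A @ B). length (snd x) = k \<Longrightarrow> V (A @ B) = vadd (V A) (V B)" for A B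
    unfolding V_def F_def by (rule V_append)
  have Vwz: "V (ws @ zs) = vadd (V ws) (V zs)" using Vapp[of ws zs] lzs lws by auto
  have VC: "V (x # L) = vadd (F x) (V L)" for x L unfolding V_def by simp
  have oeq: "A \<noteq> [] \<Longrightarrow> B \<noteq> [] \<Longrightarrow> \<forall>x\<in>set A. length (snd x) = k \<Longrightarrow> \<forall>x\<in>set B. length (snd x) = k \<Longrightarrow>
    V A = V B \<Longrightarrow> oplus k A = oplus k B" for A B
    using oplus_phi eq_by_phi_sh unfolding V_def F_def by metis
  have zcases: "z \<in> W N \<or> (\<exists>ys. set ys \<subseteq> W N \<and> (\<forall>y\<in>set ys. 1 < fst y) \<and> length ys = N + 2
   \<and> (z = oplus k ys \<or> (\<exists>r\<in>Wall k c lam. z = padd (oplus k ys) r)))"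
    using decomp Cons.prems by auto
  have zs': "set zs \<subseteq> W (Suc N)" "\<forall>z\<in>set zs. 1 < fst z" using Cons.prems by auto
  show ?case
  proof (cases "z \<in> W N")
    case True
    have eq: "oplus k (ws @ z # zs) = oplus k ((z # ws) @ zs)"
    proof (rule oeq)
      have "V (ws @ z # zs) = vadd (V ws) (vadd (F z) (V zs))" using lall Vapp[of ws "z # zs"] VC by simp
      also have "\<dots> = V ((z # ws) @ zs)" using Vwz VC by (simp add: vadd_left_comm)
      finally show "V (ws @ z # zs) = V ((z # ws) @ zs)" .
    qed (use lz lzs lws in auto)
    have "oplus k ((z # ws) @ zs) \<in> Wall k c lam"
      by (rule Cons.IH[OF zs']) (use Cons.prems True in auto)
    then show ?thesis using eq by simp
  next
    case False
    then obtain ys where ys: "set ys \<subseteq> W N" "\<forall>y\<in>set ys. 1 < fst y" "length ys = N + 2"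
      "z = oplus k ys \<or> (\<exists>r\<in>Wall k c lam. z = padd (oplus k ys) r)" using zcases by blast
    have lys: "\<forall>x\<in>set ys. length (snd x) = k" using ys W_len by auto
    have ney: "ys \<noteq> []" using ys by auto
    have Fo: "F (oplus k ys) = V ys" unfolding F_def V_def using oplus_phi[OF ney lys] .
    have rec: "oplus k ((ys @ ws) @ zs) \<in> Wall k c lam"
      by (rule Cons.IH[OF zs']) (use Cons.prems ys in auto)
    have lo: "length (snd (oplus k ys)) = k" using oplus_len[OF lys] .
    have "V ((ys @ ws) @ zs) = vadd (V (ys @ ws)) (V zs)" using Vapp[of "ys @ ws" zs] lys lzs lws by auto
    moreover have "V (ys @ ws) = vadd (V ys) (V ws)" using Vapp[of ys ws] lys lws by auto
    ultimately have Vbig: "V ((ys @ ws) @ zs) = vadd (V ys) (vadd (V ws) (V zs))"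
      by (simp add: vadd_assoc)
    show ?thesis
    proof (cases "z = oplus k ys")
      case True
      have eq: "oplus k (ws @ z # zs) = oplus k ((ys @ ws) @ zs)"
      proof (rule oeq)
        have "V (ws @ z # zs) = vadd (V ws) (vadd (F z) (V zs))" using lall Vapp[of ws "z # zs"] VC by simp
        also have "\<dots> = V ((ys @ ws) @ zs)" using Vbig Fo True by (simp add: vadd_left_comm)
        finally show "V (ws @ z # zs) = V ((ys @ ws) @ zs)" .
      qed (use lz lzs lws lys ney in auto)
      then show ?thesis using rec by simp
    next
      case False
      then obtain r where r: "r \<in> Wall k c lam" "z = padd (oplus k ys) r" using ys by blast
      have lr: "length (snd r) = k" using Wall_len r by blast
      have Fz: "F z = vadd (V ys) (phi r)" using r phi_sh_padd1[OF lo lr] Fo unfolding F_def by simp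
      define Ob where "Ob = oplus k ((ys @ ws) @ zs)"
      have lOb: "length (snd Ob) = k" unfolding Ob_def using lys lzs lws by (intro oplus_len) auto
      have FOb: "F Ob = V ((ys @ ws) @ zs)" unfolding Ob_def F_def V_def
        by (rule oplus_phi) (use lys lzs lws ney in auto)
      have "phi (sh (oplus k (ws @ z # zs))) = V (ws @ z # zs)" unfolding V_def F_def
        by (rule oplus_phi) (use lz lzs lws in auto)
      also have "\<dots> = vadd (V ws) (vadd (vadd (V ys) (phi r)) (V zs))" using lall Vapp[of ws "z # zs"] VC Fz by simp
      also have "\<dots> = vadd (vadd (V ys) (vadd (V ws) (V zs))) (phi r)"
        by (simp add: vadd_assoc vadd_left_comm vadd_comm)
      also have "\<dots> = phi (sh (padd Ob r))" using phi_sh_padd1[OF lOb lr] FOb Vbig unfolding F_def by simp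
      finally have "oplus k (ws @ z # zs) = padd Ob r" by (rule eq_by_phi_sh)
      then show ?thesis using Wall_add[OF _ r(1)] rec Ob_def by simp
    qed
  qed
qed

lemma closure_main: "set zs \<subseteq> W N \<Longrightarrow> \<forall>z\<in>set zs. 1 < fst z \<Longrightarrow> 2 \<le> length zs \<Longrightarrow> oplus k zs \<in> Wall k c lam"
proof (induction N arbitrary: zs)
  case 0 show ?case by (rule base[of zs 0]) (use 0 in auto)
next
  case (Suc N)
  have IH': "\<And>zs. set zs \<subseteq> W N \<Longrightarrow> \<forall>z\<in>set zs. 1 < fst z \<Longrightarrow> 2 \<le> length zs \<Longrightarrow> oplus k zs \<in> Wall k c lam"
    using Suc.IH by blast
  have "oplus k ([] @ zs) \<in> Wall k c lam"
    using stepB[OF IH' Suc.prems(1) Suc.prems(2), of "[]"] Suc.prems(3) by simp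
  then show ?case by simp
qed

end

theorem proposition5p1:
  fixes k :: nat and c :: "pt \<Rightarrow> real" and lam \<beta> :: real
  assumes "in_Lk k c"
    and "leading_lambda_z k c lam"
    and "0 < lam" and "lam < 1"
    and "\<beta> > 1"
  shows "lex_wellordered (Wbeta k c lam \<beta>) \<and>
         (\<forall>m \<ge> 2. \<forall>xs. length xs = m \<and> set xs \<subseteq> Wbeta k c lam \<beta> \<longrightarrow>
             psub (psum k xs) (real (m - 1), zvec k) \<in> Wbeta k c lam \<beta>)"
proof -
  interpret setting k c lam using assms(1,2) by unfold_locales
  have A: "lex_wellordered (Wbeta k c lam \<beta>)" using wellordered assms(5) by blast
  have B: "psub (psum k xs) (real (m - 1), zvec k) \<in> Wbeta k c lam \<beta>"
    if m: "m \<ge> 2" and xs: "length xs = m" "set xs \<subseteq> Wbeta k c lam \<beta>" for m xs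
  proof -
    have eq: "psub (psum k xs) (real (m - 1), zvec k) = oplus k xs" using xs by (simp add: oplus_def)
    have sW: "set xs \<subseteq> Wall k c lam" and fb: "\<forall>x\<in>set xs. fst x \<ge> \<beta>"
      using xs unfolding Wbeta_def by auto
    obtain N where N: "set xs \<subseteq> W N" using list_level[OF sW] by blast
    have f1: "\<forall>x\<in>set xs. 1 < fst x" using fb assms(5) by fastforce
    have inW: "oplus k xs \<in> Wall k c lam" using closure_main[OF N f1] m xs by simp
    have "sum_list (map fst xs) \<ge> real m * \<beta>" using sum_fst_ge[OF fb] xs by simp
    moreover have "fst (oplus k xs) = sum_list (map fst xs) - real (m - 1)" using fst_oplus xs by simp
    moreover have "real (m - 1) = real m - 1" using m by simp
    moreover have "real m * \<beta> - (real m - 1) \<ge> \<beta>"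
    proof -
      have "(real m - 1) * (\<beta> - 1) \<ge> 0" using m assms(5) by simp
      then show ?thesis by (simp add: algebra_simps)
    qed
    ultimately have "fst (oplus k xs) \<ge> \<beta>" by linarith
    then show ?thesis using inW eq unfolding Wbeta_def by simp
  qed
  show ?thesis using A B by blast
qed

end
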